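(* Let $m,n\geq 0$ be integers. Then \[ \sum_{k=1}^{n}\frac{(q/z;q)_{k}(vq^m;q)_{k}(z;q)_{n-k}(z;q)_m}{(q;q)_k (v;q)_{k} (q;q)_{n-k}(q^k;q)_{m+1}}z^k -\sum_{k=1}^{m}\frac{(q/z;q)_{k} (vq^n;q)_{k}(z;q)_{m-k}(z;q)_n}{(q;q)_k (v;q)_{k}(q;q)_{m-k}(q^k;q)_{n+1}}z^k \] \[ =\frac{(1-zq^{-1})(z;q)_m(z;q)_n}{(q;q)_{m}(q;q)_{n}}\left(\sum_{k=1}^m\frac{q^k}{(1-zq^{k-1})(1-q^k)}-\sum_{k=1}^n\frac{q^k}{(1-zq^{k-1})(1-q^k)}\right). \]
   Context: For $N\geq 0$, $(x;q)_N=(1-x)(1-xq)\cdots(1-xq^{N-1})$ (with $(x;q)_0=1$). The identity is one of rational functions in $q,z,v$. *)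

theory Defs
  imports Complex_Main
begin

definition qpoch :: "'a::comm_ring_1 \<Rightarrow> 'a \<Rightarrow> nat \<Rightarrow> 'a" where
  "qpoch x q N = (\<Prod>i<N. (1 - x * q ^ i))"

end

theory Submission imports Defs begin

lemma qpoch_0[simp]: "qpoch x q 0 = 1" by (simp add: qpoch_def)
lemma qpoch_Suc: "qpoch x q (Suc N) = qpoch x q N * (1 - x * q ^ N)" by (simp add: qpoch_def)
lemma qpoch_add: "qpoch x q (a + b) = qpoch x q a * qpoch (x * q ^ a) q b"
  by (induction b) (simp_all add: qpoch_Suc power_add mult_ac)
lemma qpoch_nz: assumes "\<And>i. i < N \<Longrightarrow> x * q ^ i \<noteq> (1::complex)" shows "qpoch x q N \<noteq> 0"
  using assms unfolding qpoch_def by (auto)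

lemma tri_Suc: "Suc j * Suc (Suc j) div 2 = j * Suc j div 2 + Suc j"
proof -
  have "Suc j * Suc (Suc j) = j * Suc j + 2 * Suc j" by simp
  thus ?thesis by simp
qed

locale qctx =
  fixes q z v :: complex
  assumes q0: "q \<noteq> 0" and z0: "z \<noteq> 0"
    and qj: "\<And>j::nat. j \<ge> 1 \<Longrightarrow> q ^ j \<noteq> 1"
    and zq: "\<And>j::nat. z * q ^ j \<noteq> 1"
    and vq: "\<And>j::nat. v * q ^ j \<noteq> 1"
begin

lemma qS: "q * q ^ i \<noteq> 1" using qj[of "Suc i"] by simp
lemma omq: "j \<ge> 1 \<Longrightarrow> 1 - q ^ j \<noteq> 0" using qj by auto
lemma omqS: "1 - q * q ^ j \<noteq> 0" using qS by auto
lemma omz: "1 - z * q ^ j \<noteq> 0" using zq by auto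
lemma omv: "1 - v * q ^ j \<noteq> 0" using vq by auto

lemma Pq_nz: "qpoch q q N \<noteq> 0" by (rule qpoch_nz) (use qS in auto)
lemma Pv_nz: "qpoch v q N \<noteq> 0" by (rule qpoch_nz) (use vq in auto)
lemma Pz_nz: "qpoch z q N \<noteq> 0" by (rule qpoch_nz) (use zq in auto)
lemma Pqk_nz: "k \<ge> 1 \<Longrightarrow> qpoch (q^k) q N \<noteq> 0"
  by (rule qpoch_nz) (use qj in \<open>auto simp: power_add[symmetric]\<close>)

definition eA :: "nat \<Rightarrow> nat \<Rightarrow> nat \<Rightarrow> complex" where
 "eA m k j = (if j \<le> k \<and> j \<le> m then qpoch q q k * qpoch q q m / (qpoch q q j * qpoch q q (k-j) * qpoch q q (m-j))
     * (\<Prod>i<j. q^Suc i) * (-1/z)^j * qpoch (q^(m+1)/z) q (k-j) * qpoch (v*z/q) q j / qpoch v q j else 0)"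

definition HA :: "nat \<Rightarrow> nat \<Rightarrow> nat \<Rightarrow> complex" where
 "HA m k j = - (q^(Suc k-j) * (1-q^j) * (1 - v*q^j/q) * eA m (Suc k) j / (1-q^(Suc k)))"

lemma eA_base:
  fixes j d c :: nat
  defines "B \<equiv> qpoch q q (j+d) * qpoch q q (j+c) / (qpoch q q (Suc j) * qpoch q q (Suc d) * qpoch q q c)
     * (\<Prod>i<j. q^Suc i) * (-1/z)^j * qpoch (q^(j+c+1)/z) q d * qpoch (v*z/q) q j / qpoch v q (Suc j)"
  shows "eA (j+c) (j+d) j = B * ((1 - q*q^j) * (1 - q*q^d) * (1 - v*q^j))"
    and "eA (j+c) (Suc (j+d)) j = B * ((1 - q*q^(j+d)) * (1 - q*q^j) * (1 - v*q^j) * (1 - q^(j+c+1)*q^d/z))"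
    and "eA (j+c) (Suc (j+d)) (Suc j) = B * ((1 - q*q^(j+d)) * (1 - q*q^d) * (1 - q^c) * (q*q^j) * (-1/z) * (1 - v*z/q*q^j))"
proof -
  have n1: "qpoch q q (Suc j) \<noteq> 0" "qpoch q q (Suc d) \<noteq> 0" "qpoch q q c \<noteq> 0" "qpoch v q (Suc j) \<noteq> 0"
    "qpoch q q j \<noteq> 0" "qpoch q q d \<noteq> 0" "qpoch v q j \<noteq> 0"
    by (simp_all add: Pq_nz Pv_nz)
  show "eA (j+c) (j+d) j = B * ((1 - q*q^j) * (1 - q*q^d) * (1 - v*q^j))"
    unfolding eA_def B_def using n1 omqS[of j] omqS[of d] omv[of j] by (simp add: qpoch_Suc) (simp add: divide_simps)
  show "eA (j+c) (Suc (j+d)) j = B * ((1 - q*q^(j+d)) * (1 - q*q^j) * (1 - v*q^j) * (1 - q^(j+c+1)*q^d/z))"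
    unfolding eA_def B_def using n1 z0 omqS[of j] omqS[of d] omv[of j] by (simp add: qpoch_Suc Suc_diff_le) (simp add: divide_simps)
  show "eA (j+c) (Suc (j+d)) (Suc j) = B * ((1 - q*q^(j+d)) * (1 - q*q^d) * (1 - q^c) * (q*q^j) * (-1/z) * (1 - v*z/q*q^j))"
  proof (cases c)
    case 0
    then show ?thesis by (simp add: eA_def)
  next
    case (Suc c')
    have ps: "qpoch q q c = qpoch q q c' * (1 - q * q^c')" using Suc by (simp add: qpoch_Suc)
    have ne: "qpoch q q c' \<noteq> 0" by (simp add: Pq_nz)
    show ?thesis
      unfolding eA_def B_def using n1 z0 q0 ne Suc omqS[of j] omqS[of d] omv[of j] omqS[of c']
      by (simp add: qpoch_Suc ps) (simp add: divide_simps)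
  qed
qed

lemma tele_A:
  assumes "j \<le> Suc k"
  shows "(1 - v*q^k) * eA m (Suc k) j - (1 - q^(Suc k)/z)*(1 - v*q^(m+k)) * eA m k j = HA m k (Suc j) - HA m k j"
proof (cases "j \<le> m")
  case False
  then show ?thesis by (simp add: HA_def eA_def)
next
  case jm: True
  show ?thesis
  proof (cases "j = Suc k")
    case True
    have "eA m k j = 0" "eA m (Suc k) (Suc j) = 0" using True by (simp_all add: eA_def)
    then show ?thesis using True q0 omqS[of k] by (simp add: HA_def divide_simps)
  next
    case False
    with assms have jk: "j \<le> k" by simp
    obtain d where kd: "k = j + d" using jk le_Suc_ex by blast
    obtain c where mc: "m = j + c" using jm le_Suc_ex by blast
    define B where "B \<equiv> qpoch q q (j+d) * qpoch q q (j+c) / (qpoch q q (Suc j) * qpoch q q (Suc d) * qpoch q q c)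
     * (\<Prod>i<j. q^Suc i) * (-1/z)^j * qpoch (q^(j+c+1)/z) q d * qpoch (v*z/q) q j / qpoch v q (Suc j)"
    have e: "eA (j+c) (j+d) j = B * ((1 - q*q^j) * (1 - q*q^d) * (1 - v*q^j))"
     "eA (j+c) (Suc (j+d)) j = B * ((1 - q*q^(j+d)) * (1 - q*q^j) * (1 - v*q^j) * (1 - q^(j+c+1)*q^d/z))"
     "eA (j+c) (Suc (j+d)) (Suc j) = B * ((1 - q*q^(j+d)) * (1 - q*q^d) * (1 - q^c) * (q*q^j) * (-1/z) * (1 - v*z/q*q^j))"
      unfolding B_def by (rule eA_base)+
    have ex: "Suc (j+d) - j = Suc d" "Suc (j+d) - Suc j = d" by simp_all
    show ?thesis unfolding HA_def kd mc e ex using q0 z0 omqS[of "j+d"]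
      apply (simp add: power_add)
      apply (simp add: divide_simps)
      apply (simp add: algebra_simps)
      done
  qed
qed

lemma sumA: "(\<Sum>j\<le>k. eA m k j) = qpoch (q/z) q k * qpoch (v*q^m) q k / qpoch v q k"
proof (induction k)
  case 0
  then show ?case by (simp add: eA_def Pq_nz)
next
  case (Suc k)
  have ext: "(\<Sum>j\<le>k. eA m k j) = (\<Sum>j\<le>Suc k. eA m k j)"
    by (simp add: eA_def)
  have "(\<Sum>j\<le>Suc k. (1 - v*q^k) * eA m (Suc k) j - (1 - q^(Suc k)/z)*(1 - v*q^(m+k)) * eA m k j)
        = (\<Sum>j\<le>Suc k. HA m k (Suc j) - HA m k j)"
    by (rule sum.cong[OF refl], rule tele_A, simp)
  also have "\<dots> = HA m k (Suc (Suc k)) - HA m k 0"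
    unfolding lessThan_Suc_atMost[symmetric] by (rule sum_lessThan_telescope)
  also have "\<dots> = 0" by (simp add: HA_def eA_def)
  finally have "(1 - v*q^k) * (\<Sum>j\<le>Suc k. eA m (Suc k) j) - (1 - q^(Suc k)/z)*(1 - v*q^(m+k)) * (\<Sum>j\<le>Suc k. eA m k j) = 0"
    by (simp only: sum_subtractf sum_distrib_left)
  then have "(1 - v*q^k) * (\<Sum>j\<le>Suc k. eA m (Suc k) j) = (1 - q^(Suc k)/z)*(1 - v*q^(m+k)) * (\<Sum>j\<le>k. eA m k j)"
    unfolding ext[symmetric] by (simp only: right_minus_eq)
  then have "(\<Sum>j\<le>Suc k. eA m (Suc k) j) = (1 - q^(Suc k)/z)*(1 - v*q^(m+k)) * (\<Sum>j\<le>k. eA m k j) / (1 - v*q^k)"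
    using omv[of k] by (simp add: field_simps)
  then show ?case unfolding Suc.IH using omv[of k] Pv_nz[of k]
    by (simp add: qpoch_Suc power_add mult_ac)
qed

definition wB :: "complex \<Rightarrow> nat \<Rightarrow> nat \<Rightarrow> nat \<Rightarrow> complex" where
 "wB b m N l = qpoch (q^(m+1)/z) q l * z^l * qpoch z q (N-l) / (qpoch q q l * qpoch q q (N-l) * qpoch (b*q^l) q (m+1))"

definition GB :: "complex \<Rightarrow> nat \<Rightarrow> nat \<Rightarrow> nat \<Rightarrow> complex" where
 "GB b m N l = - (q^(Suc N - l) * (1 - q^l) * (1 - b*q^(m+l)) * wB b m (Suc N) l)"

lemma wB_base:
  fixes l d m :: nat and b :: complex
  assumes bl: "\<And>i. i \<ge> l \<Longrightarrow> b*q^i \<noteq> 1"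
  defines "B \<equiv> qpoch (q^(m+1)/z) q l * z^l * qpoch z q d / (qpoch q q (Suc l) * qpoch q q (Suc d) * qpoch (b*q^(Suc l)) q m * (1 - b*q^l) * (1 - b*q^(Suc l)*q^m))"
  shows "wB b m (l+d) l = B * ((1 - q*q^l) * (1 - q*q^d) * (1 - b*q^(Suc l)*q^m))"
    and "wB b m (Suc (l+d)) l = B * ((1 - q*q^l) * (1 - z*q^d) * (1 - b*q^(Suc l)*q^m))"
    and "wB b m (Suc (l+d)) (Suc l) = B * ((1 - q^(m+1)/z*q^l) * z * (1 - q*q^d) * (1 - b*q^l))"
proof -
  have f1: "qpoch (b*q^l) q (m+1) = (1 - b*q^l) * qpoch (b*q^(Suc l)) q m"
  proof -
    have "qpoch (b*q^l) q (m+1) = qpoch (b*q^l) q (1+m)" by (simp add: add.commute)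
    also have "\<dots> = qpoch (b*q^l) q 1 * qpoch (b*q^l*q^1) q m" by (rule qpoch_add)
    finally show ?thesis by (simp add: qpoch_def mult_ac)
  qed
  have f2: "qpoch (b*q^(Suc l)) q (m+1) = qpoch (b*q^(Suc l)) q m * (1 - b*q^(Suc l)*q^m)"
    by (simp add: qpoch_Suc)
  have n1: "1 - b*q^l \<noteq> 0" using bl[of l] by auto
  have n2: "1 - b*q^(Suc l)*q^m \<noteq> 0" using bl[of "Suc l + m"] by (auto simp: power_add mult_ac)
  have n3: "qpoch (b*q^(Suc l)) q m \<noteq> 0"
  proof (rule qpoch_nz)
    fix i assume "i < m"
    show "b * q ^ Suc l * q ^ i \<noteq> 1" using bl[of "Suc l + i"] by (simp add: power_add mult_ac)
  qed
  have n4: "qpoch q q l \<noteq> 0" "qpoch q q d \<noteq> 0" by (simp_all add: Pq_nz)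
  show "wB b m (l+d) l = B * ((1 - q*q^l) * (1 - q*q^d) * (1 - b*q^(Suc l)*q^m))"
    unfolding wB_def B_def f1 using n1 n2 n3 n4 omqS[of l] omqS[of d]
    by (simp add: qpoch_Suc) (simp add: divide_simps)
  show "wB b m (Suc (l+d)) l = B * ((1 - q*q^l) * (1 - z*q^d) * (1 - b*q^(Suc l)*q^m))"
    unfolding wB_def B_def f1 using n1 n2 n3 n4 omqS[of l] omqS[of d]
    by (simp add: qpoch_Suc Suc_diff_le) (simp add: divide_simps)
  show "wB b m (Suc (l+d)) (Suc l) = B * ((1 - q^(m+1)/z*q^l) * z * (1 - q*q^d) * (1 - b*q^l))"
    unfolding wB_def B_def f2 using n1 n2 n3 n4 omqS[of l] omqS[of d] z0
    by (simp add: qpoch_Suc) (simp add: divide_simps)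
qed

lemma tele_B:
  assumes "l \<le> N" and bl: "\<And>i. i \<ge> l \<Longrightarrow> b*q^i \<noteq> 1"
  shows "(1 - q^(Suc N))*(1 - b*q^(N+m+1)) * wB b m (Suc N) l - (1 - b*z*q^N)*(1 - q^(N+m+1)) * wB b m N l
         = GB b m N (Suc l) - GB b m N l"
proof -
  obtain d where Nd: "N = l + d" using assms(1) le_Suc_ex by blast
  define B where "B \<equiv> qpoch (q^(m+1)/z) q l * z^l * qpoch z q d / (qpoch q q (Suc l) * qpoch q q (Suc d) * qpoch (b*q^(Suc l)) q m * (1 - b*q^l) * (1 - b*q^(Suc l)*q^m))"
  have e: "wB b m (l+d) l = B * ((1 - q*q^l) * (1 - q*q^d) * (1 - b*q^(Suc l)*q^m))"
     "wB b m (Suc (l+d)) l = B * ((1 - q*q^l) * (1 - z*q^d) * (1 - b*q^(Suc l)*q^m))"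
     "wB b m (Suc (l+d)) (Suc l) = B * ((1 - q^(m+1)/z*q^l) * z * (1 - q*q^d) * (1 - b*q^l))"
    unfolding B_def by (rule wB_base[OF bl], assumption)+
  have ex: "Suc (l+d) - l = Suc d" "Suc (l+d) - Suc l = d" by simp_all
  show ?thesis unfolding GB_def Nd e ex using q0 z0
      apply (simp add: power_add)
      apply (simp add: divide_simps)
      apply (simp add: algebra_simps)
      done
qed

lemma tele_B_last:
  "(1 - q^(Suc N))*(1 - b*q^(N+m+1)) * wB b m (Suc N) (Suc N) = - GB b m N (Suc N)"
  unfolding GB_def by (simp add: ac_simps)

lemma GB_0: "GB b m N 0 = 0" by (simp add: GB_def)

lemma sum_lin: fixes a b :: complex shows "(\<Sum>l\<in>A. a * f l - b * g l) = a * sum f A - b * sum g A"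
  by (simp add: sum_subtractf sum_distrib_left)

lemma sumB:
  assumes "j \<ge> 1"
  shows "(\<Sum>l\<le>N. wB (q^j) m N l) = qpoch (q^j*z) q N * qpoch q q (N+m) / (qpoch q q N * qpoch q q m * qpoch (q^j) q (N+m+1))"
proof (induction N)
  case 0
  then show ?case using Pq_nz[of m] by (simp add: wB_def)
next
  case (Suc N)
  have bl: "\<And>i. q^j*q^i \<noteq> 1" using qj assms by (simp add: power_add[symmetric])
  define X where "X = (1 - q^(Suc N))*(1 - q^j*q^(N+m+1))"
  define Y where "Y = (1 - q^j*z*q^N)*(1 - q^(N+m+1))"
  have "(\<Sum>l\<le>N. X * wB (q^j) m (Suc N) l - Y * wB (q^j) m N l)
     = (\<Sum>l\<le>N. GB (q^j) m N (Suc l) - GB (q^j) m N l)"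
    unfolding X_def Y_def by (rule sum.cong[OF refl], rule tele_B, simp, rule bl)
  also have "\<dots> = GB (q^j) m N (Suc N)"
    unfolding lessThan_Suc_atMost[symmetric] sum_lessThan_telescope GB_0 by simp
  finally have 1: "X * (\<Sum>l\<le>N. wB (q^j) m (Suc N) l) - Y * (\<Sum>l\<le>N. wB (q^j) m N l) = GB (q^j) m N (Suc N)"
    by (simp only: sum_lin)
  have 2: "X * wB (q^j) m (Suc N) (Suc N) = - GB (q^j) m N (Suc N)"
    unfolding X_def by (rule tele_B_last)
  have 3: "X * (\<Sum>l\<le>Suc N. wB (q^j) m (Suc N) l) = X * (\<Sum>l\<le>N. wB (q^j) m (Suc N) l) + X * wB (q^j) m (Suc N) (Suc N)"
    by (simp add: distrib_left)
  have Xnz: "X \<noteq> 0" unfolding X_def using omqS[of N] bl[of "N+m+1"] by simp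
  from 1 2 3 have "X * (\<Sum>l\<le>Suc N. wB (q^j) m (Suc N) l) = Y * (\<Sum>l\<le>N. wB (q^j) m N l)"
    by (simp add: algebra_simps)
  then have "(\<Sum>l\<le>Suc N. wB (q^j) m (Suc N) l) = Y * (\<Sum>l\<le>N. wB (q^j) m N l) / X"
    using Xnz by (simp add: field_simps)
  also have "\<dots> = qpoch (q^j*z) q (Suc N) * qpoch q q (Suc N+m) / (qpoch q q (Suc N) * qpoch q q m * qpoch (q^j) q (Suc N+m+1))"
    unfolding Suc.IH X_def Y_def using omqS[of N] bl[of "N+m+1"] Pq_nz[of N] Pq_nz[of m] Pq_nz[of "N+m"] Pqk_nz[OF assms, of "N+m+1"]
    by (simp add: qpoch_Suc) (simp add: divide_simps mult_ac)
  finally show ?case .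
qed

lemma sumJ:
  "(\<Sum>l\<in>{1..N}. wB 1 m N l) = qpoch z q N / (qpoch q q N * qpoch q q m) *
     ((\<Sum>i<N. z*q^i/(1-z*q^i)) - (\<Sum>i\<in>{Suc m..m+N}. q^i/(1-q^i)))"
proof (induction N)
  case 0
  then show ?case by simp
next
  case (Suc N)
  have bl: "\<And>i. i \<ge> 1 \<Longrightarrow> 1*q^i \<noteq> 1" using qj by simp
  define X where "X = (1 - q^(Suc N))*(1 - 1*q^(N+m+1))"
  define Y where "Y = (1 - 1*z*q^N)*(1 - q^(N+m+1))"
  have "(\<Sum>l\<in>{1..N}. X * wB 1 m (Suc N) l - Y * wB 1 m N l)
     = (\<Sum>l\<in>{1..N}. GB 1 m N (Suc l) - GB 1 m N l)"
    unfolding X_def Y_def by (rule sum.cong[OF refl], rule tele_B, simp, rule bl, simp)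
  also have "\<dots> = GB 1 m N (Suc N) - GB 1 m N 1"
    by (rule sum_Suc_diff) simp
  finally have 1: "X * (\<Sum>l\<in>{1..N}. wB 1 m (Suc N) l) - Y * (\<Sum>l\<in>{1..N}. wB 1 m N l) = GB 1 m N (Suc N) - GB 1 m N 1"
    by (simp only: sum_lin)
  have 2: "X * wB 1 m (Suc N) (Suc N) = - GB 1 m N (Suc N)"
    unfolding X_def by (rule tele_B_last)
  have 3: "X * (\<Sum>l\<in>{1..Suc N}. wB 1 m (Suc N) l) = X * (\<Sum>l\<in>{1..N}. wB 1 m (Suc N) l) + X * wB 1 m (Suc N) (Suc N)"
    by (simp add: distrib_left)
  have 4: "- GB 1 m N 1 = q^N * (z - q^(m+1)) * qpoch z q N / (qpoch q q N * qpoch q q m)"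
    unfolding GB_def wB_def using z0 omqS[of 0] omqS[of m] Pq_nz[of N] Pq_nz[of m]
    by (simp add: qpoch_Suc qpoch_def[of q q 1]) (simp add: divide_simps)
  have Xnz: "X \<noteq> 0" unfolding X_def using omqS[of N] omqS[of "N+m"] by simp
  have 5: "X * (\<Sum>l\<in>{1..N}. wB 1 m (Suc N) l) = GB 1 m N (Suc N) - GB 1 m N 1 + Y * (\<Sum>l\<in>{1..N}. wB 1 m N l)"
    using 1 by (simp add: algebra_simps)
  have "X * (\<Sum>l\<in>{1..Suc N}. wB 1 m (Suc N) l) = Y * (\<Sum>l\<in>{1..N}. wB 1 m N l) + (- GB 1 m N 1)"
    unfolding 3 5 2 by simp
  then have "X * (\<Sum>l\<in>{1..Suc N}. wB 1 m (Suc N) l) = Y * (\<Sum>l\<in>{1..N}. wB 1 m N l) + q^N * (z - q^(m+1)) * qpoch z q N / (qpoch q q N * qpoch q q m)"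
    unfolding 4 .
  then have "(\<Sum>l\<in>{1..Suc N}. wB 1 m (Suc N) l) = (Y * (\<Sum>l\<in>{1..N}. wB 1 m N l) + q^N * (z - q^(m+1)) * qpoch z q N / (qpoch q q N * qpoch q q m)) / X"
    using Xnz by (simp add: field_simps)
  also have "\<dots> = qpoch z q (Suc N) / (qpoch q q (Suc N) * qpoch q q m) *
     ((\<Sum>i<Suc N. z*q^i/(1-z*q^i)) - (\<Sum>i\<in>{Suc m..m+Suc N}. q^i/(1-q^i)))"
    unfolding Suc.IH X_def Y_def using omqS[of N] omqS[of "N+m"] omz[of N] Pq_nz[of N] Pq_nz[of m] Pz_nz[of N]
    by (simp add: qpoch_Suc) (simp add: divide_simps, simp add: algebra_simps power_add)
  finally show ?case .
qed

definition Qf :: "nat \<Rightarrow> nat \<Rightarrow> nat \<Rightarrow> complex" where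
 "Qf n m k = qpoch z q (n-k) * qpoch z q m * z^k / (qpoch q q k * qpoch q q (n-k) * qpoch (q^k) q (m+1))"

lemma T_expand:
  assumes "k \<ge> 1"
  shows "qpoch (q/z) q k * qpoch (v * q^m) q k * qpoch z q (n-k) * qpoch z q m
            / (qpoch q q k * qpoch v q k * qpoch q q (n-k) * qpoch (q^k) q (m+1)) * z^k
       = (\<Sum>j\<le>k. Qf n m k * eA m k j)"
  unfolding sum_distrib_left[symmetric] sumA Qf_def using Pv_nz[of k] Pq_nz[of k] Pq_nz[of "n-k"] Pqk_nz[OF assms, of "m+1"]
  by (simp add: divide_simps)

lemma part0: "Qf n m k * eA m k 0 = qpoch z q m * wB 1 m n k"
  unfolding Qf_def wB_def eA_def using Pq_nz[of m] by simp

definition cst :: "nat \<Rightarrow> nat \<Rightarrow> complex" where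
 "cst m j = qpoch q q m / (qpoch q q j * qpoch q q (m-j)) * (\<Prod>i<j. q^Suc i) * (-1)^j * qpoch (v*z/q) q j / qpoch v q j * qpoch z q m"

definition symt :: "nat \<Rightarrow> nat \<Rightarrow> nat \<Rightarrow> complex" where
 "symt n m j = (\<Prod>i<j. q^Suc i) * (-1)^j * qpoch (v*z/q) q j / qpoch v q j *
    (qpoch z q m * qpoch z q n * qpoch q q (n+m-j) / (qpoch z q j * qpoch q q j * qpoch q q (m-j) * qpoch q q (n-j) * qpoch (q^j) q (n+m+1-j)))"

lemma sym_comm: "symt n m j = symt m n j"
  unfolding symt_def by (simp add: ac_simps)

lemma partj:
  assumes "1 \<le> j" "j \<le> m"
  shows "Qf n m (l+j) * eA m (l+j) j = cst m j * wB (q^j) m (n-j) l"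
proof -
  have e: "n - (l+j) = n - j - l" by simp
  have zz: "z^(l+j) * (-1/z)^j = z^l * (-1)^j"
  proof -
    have "z^(l+j) * (-1/z)^j = z^l * (z * (-1/z))^j" by (simp only: power_add power_mult_distrib mult.assoc)
    also have "z * (-1/z) = -1" using z0 by simp
    finally show ?thesis .
  qed
  have zz2: "z^j * (-(1/z))^j = (-1)^j"
  proof -
    have "z^j * (-(1/z))^j = (z * (-(1/z)))^j" by (simp only: power_mult_distrib)
    also have "z * (-(1/z)) = -1" using z0 by simp
    finally show ?thesis .
  qed
  show ?thesis
    unfolding Qf_def eA_def cst_def wB_def e using assms Pq_nz[of "l+j"] z0
    by (simp add: power_add mult_ac) (simp add: divide_simps zz2 power_add mult_ac)
qed

lemma inner:
  assumes "1 \<le> j" "j \<le> n"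
  shows "(\<Sum>k\<in>{j..n}. Qf n m k * eA m k j) = (if j \<le> m then symt n m j else 0)"
proof (cases "j \<le> m")
  case False
  then show ?thesis by (simp add: eA_def)
next
  case True
  have "(\<Sum>k\<in>{j..n}. Qf n m k * eA m k j) = (\<Sum>l\<in>{0..n-j}. Qf n m (l+j) * eA m (l+j) j)"
    using sum.shift_bounds_cl_nat_ivl[of "\<lambda>k. Qf n m k * eA m k j" 0 j "n-j"] assms by simp
  also have "\<dots> = (\<Sum>l\<in>{0..n-j}. cst m j * wB (q^j) m (n-j) l)"
    by (rule sum.cong[OF refl], rule partj) (use True assms in auto)
  also have "\<dots> = cst m j * (\<Sum>l\<le>n-j. wB (q^j) m (n-j) l)"
    by (simp add: sum_distrib_left atMost_atLeast0)
  also have "\<dots> = cst m j * (qpoch (q^j*z) q (n-j) * qpoch q q (n-j+m) / (qpoch q q (n-j) * qpoch q q m * qpoch (q^j) q (n-j+m+1)))"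
    by (simp only: sumB assms)
  also have "\<dots> = symt n m j"
  proof -
    have pz: "qpoch z q n = qpoch z q j * qpoch (q^j*z) q (n-j)"
      using qpoch_add[of z q j "n-j"] assms by (simp add: mult.commute)
    have e1: "n-j+m = n+m-j" "n-j+m+1 = n+m+1-j" using assms by simp_all
    have e2: "Suc (n+m) - j = Suc (n+m-j)" using assms by simp
    show ?thesis
      unfolding cst_def symt_def pz e1 using True Pq_nz[of m] Pq_nz[of j] Pq_nz[of "m-j"] Pz_nz[of j] Pv_nz[of j]
        Pq_nz[of "n-j"] Pqk_nz[OF assms(1), of "Suc (n+m-j)"]
      by (simp add: divide_simps e2)
  qed
  finally show ?thesis using True by simp
qed

lemma swap_tri: fixes n :: nat shows "(\<Sum>k\<in>{1..n}. \<Sum>j\<in>{1..k}. F k j) = (\<Sum>j\<in>{1..n}. \<Sum>k\<in>{j..n}. (F k j :: complex))"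
proof (induction n)
  case 0
  then show ?case by simp
next
  case (Suc n)
  have "(\<Sum>j\<in>{1..Suc n}. \<Sum>k\<in>{j..Suc n}. F k j) = (\<Sum>j\<in>{1..Suc n}. (\<Sum>k\<in>{j..n}. F k j) + F (Suc n) j)"
    by (rule sum.cong) auto
  also have "\<dots> = (\<Sum>j\<in>{1..Suc n}. \<Sum>k\<in>{j..n}. F k j) + (\<Sum>j\<in>{1..Suc n}. F (Suc n) j)"
    by (simp add: sum.distrib)
  also have "(\<Sum>j\<in>{1..Suc n}. \<Sum>k\<in>{j..n}. F k j) = (\<Sum>j\<in>{1..n}. \<Sum>k\<in>{j..n}. F k j)"
    by simp
  finally show ?case using Suc.IH by simp
qed

definition Af :: "nat \<Rightarrow> nat \<Rightarrow> complex" where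
 "Af n m = (\<Sum>k=1..n. qpoch (q/z) q k * qpoch (v * q^m) q k * qpoch z q (n-k) * qpoch z q m
            / (qpoch q q k * qpoch v q k * qpoch q q (n-k) * qpoch (q^k) q (m+1)) * z^k)"

lemma Af_decomp: "Af n m = qpoch z q m * (\<Sum>l\<in>{1..n}. wB 1 m n l) + (\<Sum>j\<in>{1..min n m}. symt n m j)"
proof -
  have "Af n m = (\<Sum>k\<in>{1..n}. \<Sum>j\<le>k. Qf n m k * eA m k j)"
    unfolding Af_def by (rule sum.cong[OF refl], rule T_expand) simp
  also have "\<dots> = (\<Sum>k\<in>{1..n}. Qf n m k * eA m k 0 + (\<Sum>j\<in>{1..k}. Qf n m k * eA m k j))"
  proof (rule sum.cong[OF refl])
    fix k
    show "(\<Sum>j\<le>k. Qf n m k * eA m k j) = Qf n m k * eA m k 0 + (\<Sum>j\<in>{1..k}. Qf n m k * eA m k j)"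
      unfolding atMost_atLeast0 by (simp add: sum.atLeast_Suc_atMost)
  qed
  also have "\<dots> = (\<Sum>k\<in>{1..n}. Qf n m k * eA m k 0) + (\<Sum>k\<in>{1..n}. \<Sum>j\<in>{1..k}. Qf n m k * eA m k j)"
    by (rule sum.distrib)
  also have "\<dots> = (\<Sum>k\<in>{1..n}. qpoch z q m * wB 1 m n k) + (\<Sum>j\<in>{1..n}. \<Sum>k\<in>{j..n}. Qf n m k * eA m k j)"
    unfolding swap_tri part0 ..
  also have "(\<Sum>j\<in>{1..n}. \<Sum>k\<in>{j..n}. Qf n m k * eA m k j) = (\<Sum>j\<in>{1..n}. if j \<le> m then symt n m j else 0)"
    by (rule sum.cong) (auto simp: inner)
  also have "\<dots> = (\<Sum>j\<in>{1..min n m}. symt n m j)"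
  proof -
    have "(\<Sum>j\<in>{1..n}. if j \<le> m then symt n m j else 0) = sum (symt n m) {j\<in>{1..n}. j \<le> m}"
      using sum.inter_filter[of "{1..n}" "symt n m" "\<lambda>j. j \<le> m"] by simp
    also have "{j\<in>{1..n}. j \<le> m} = {1..min n m}" by auto
    finally show ?thesis .
  qed
  finally show ?thesis by (simp add: sum_distrib_left)
qed

lemma Hlemma: "(1 - z/q) * (\<Sum>k=1..m. q^k/((1 - z*q^(k-1))*(1 - q^k)))
   = (\<Sum>k=1..m. q^k/(1-q^k)) - (\<Sum>i<m. z*q^i/(1-z*q^i))"
proof (induction m)
  case 0
  then show ?case by simp
next
  case (Suc m)
  define S where "S m = (\<Sum>k=1..m. q^k/((1 - z*q^(k-1))*(1 - q^k)))" for m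
  define H where "H m = (\<Sum>k=1..m. q^k/(1-q^k))" for m
  define Z where "Z m = (\<Sum>i<m. z*q^i/(1-z*q^i))" for m
  have t: "(1 - z/q) * (q^Suc m/((1 - z*q^m)*(1 - q^Suc m))) = q^Suc m/(1-q^Suc m) - z*q^m/(1-z*q^m)"
    using q0 omz[of m] omqS[of m] by (simp add: divide_simps) (simp add: algebra_simps)
  have s1: "S (Suc m) = S m + q^Suc m/((1 - z*q^m)*(1 - q^Suc m))"
    unfolding S_def by (simp add: sum.cl_ivl_Suc)
  have h1: "H (Suc m) = H m + q^Suc m/(1-q^Suc m)" unfolding H_def by (simp add: sum.cl_ivl_Suc)
  have z1: "Z (Suc m) = Z m + z*q^m/(1-z*q^m)" unfolding Z_def by simp
  have "(1 - z/q) * S (Suc m) = (1 - z/q) * S m + (1 - z/q) * (q^Suc m/((1 - z*q^m)*(1 - q^Suc m)))"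
    unfolding s1 by (simp only: distrib_left)
  also have "\<dots> = H (Suc m) - Z (Suc m)"
    unfolding t h1 z1 using Suc.IH unfolding S_def H_def Z_def by simp
  finally show ?case unfolding S_def H_def Z_def .
qed

lemma Hsplit: "(\<Sum>i\<in>{Suc m..m+n}. f i) = (\<Sum>i\<in>{1..m+n}. f i) - (\<Sum>i\<in>{1..m}. (f i :: complex))"
  using sum.ub_add_nat[of 1 m f n] by simp

lemma main:
  "Af n m - Af m n = (1 - z / q) * qpoch z q m * qpoch z q n / (qpoch q q m * qpoch q q n)
         * ((\<Sum>k=1..m. q^k / ((1 - z * q^(k-1)) * (1 - q^k)))
          - (\<Sum>k=1..n. q^k / ((1 - z * q^(k-1)) * (1 - q^k))))"
proof -
  have ss: "(\<Sum>j\<in>{1..min n m}. symt n m j) = (\<Sum>j\<in>{1..min m n}. symt m n j)"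
    by (simp add: sym_comm min.commute)
  define H where "H k = (\<Sum>i\<in>{1..k}. q^i/(1-q^i))" for k
  define Z where "Z k = (\<Sum>i<k. z*q^i/(1-z*q^i))" for k
  have h1: "(\<Sum>i\<in>{Suc m..m+n}. q^i/(1-q^i)) = H (m+n) - H m" unfolding H_def by (rule Hsplit)
  have h2: "(\<Sum>i\<in>{Suc n..n+m}. q^i/(1-q^i)) = H (m+n) - H n"
    unfolding H_def using Hsplit[where m=n and n=m and f="\<lambda>i. q^i/(1-q^i)"] by (simp add: add.commute)
  have "Af n m - Af m n = qpoch z q m * (\<Sum>l\<in>{1..n}. wB 1 m n l) - qpoch z q n * (\<Sum>l\<in>{1..m}. wB 1 n m l)"
    unfolding Af_decomp ss by simp
  also have "\<dots> = qpoch z q m * qpoch z q n / (qpoch q q m * qpoch q q n) * ((H m - Z m) - (H n - Z n))"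
    unfolding sumJ h1 h2 Z_def[symmetric] using Pq_nz[of m] Pq_nz[of n]
    by (simp add: divide_simps) (simp add: algebra_simps)
  also have "\<dots> = (1 - z / q) * qpoch z q m * qpoch z q n / (qpoch q q m * qpoch q q n)
         * ((\<Sum>k=1..m. q^k / ((1 - z * q^(k-1)) * (1 - q^k)))
          - (\<Sum>k=1..n. q^k / ((1 - z * q^(k-1)) * (1 - q^k))))"
  proof -
    define Sm where "Sm = (\<Sum>k=1..m. q^k / ((1 - z * q^(k-1)) * (1 - q^k)))"
    define Sn where "Sn = (\<Sum>k=1..n. q^k / ((1 - z * q^(k-1)) * (1 - q^k)))"
    define C where "C = qpoch z q m * qpoch z q n / (qpoch q q m * qpoch q q n)"
    have a: "(1 - z/q) * Sm = H m - Z m" unfolding Sm_def H_def Z_def by (rule Hlemma)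
    have b: "(1 - z/q) * Sn = H n - Z n" unfolding Sn_def H_def Z_def by (rule Hlemma)
    have "(1 - z / q) * qpoch z q m * qpoch z q n / (qpoch q q m * qpoch q q n) * (Sm - Sn)
        = C * ((1 - z/q) * Sm - (1 - z/q) * Sn)"
      unfolding C_def using q0 by (simp add: divide_simps) (simp add: algebra_simps)
    then have "(1 - z / q) * qpoch z q m * qpoch z q n / (qpoch q q m * qpoch q q n) * (Sm - Sn)
        = C * ((H m - Z m) - (H n - Z n))" unfolding a b .
    then show ?thesis unfolding C_def Sm_def Sn_def by (rule HOL.sym)
  qed
  finally show ?thesis .
qed

end

theorem theorem1p3:
  fixes q z v :: complex and m n :: nat
  assumes "q \<noteq> 0" and "z \<noteq> 0"
    and "\<And>j::nat. j \<ge> 1 \<Longrightarrow> q ^ j \<noteq> 1"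
    and "\<And>j::nat. z * q ^ j \<noteq> 1"
    and "\<And>j::nat. v * q ^ j \<noteq> 1"
  shows "(\<Sum>k=1..n. qpoch (q/z) q k * qpoch (v * q^m) q k * qpoch z q (n-k) * qpoch z q m
            / (qpoch q q k * qpoch v q k * qpoch q q (n-k) * qpoch (q^k) q (m+1)) * z^k)
       - (\<Sum>k=1..m. qpoch (q/z) q k * qpoch (v * q^n) q k * qpoch z q (m-k) * qpoch z q n
            / (qpoch q q k * qpoch v q k * qpoch q q (m-k) * qpoch (q^k) q (n+1)) * z^k)
       = (1 - z / q) * qpoch z q m * qpoch z q n / (qpoch q q m * qpoch q q n)
         * ((\<Sum>k=1..m. q^k / ((1 - z * q^(k-1)) * (1 - q^k)))
          - (\<Sum>k=1..n. q^k / ((1 - z * q^(k-1)) * (1 - q^k))))"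
proof -
  interpret qctx q z v using assms by unfold_locales auto
  show ?thesis using main[of n m] unfolding Af_def .
qed

end
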